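(* Let $n,m\in\mathbb{N}$, $f,g\in C[0,1]$, and $I_{n,m}(f)=\int_0^1\overline{B}_{n,m}(f;x)\,dx$. Then $$ \left|I_{n,m}(fg)-I_{n,m}(f)I_{n,m}(g)\right|\le\frac14\,\widetilde{\omega}\left(f;2\sqrt{\frac1{12}+\frac1{6m^2n}}\right)\widetilde{\omega}\left(g;2\sqrt{\frac1{12}+\frac1{6m^2n}}\right). $$
   Context: $\overline{B}_{n,m}(f;x)=B_n^{[\frac{k-1}{m},\frac km]}(f;x)$ for $x\in\left[\frac{k-1}{m},\frac km\right]$, $1\le k\le m$, where $B_n^{[a,b]}(f;x)=\frac{1}{(b-a)^n}\sum_{i=0}^n\binom ni(x-a)^i(b-x)^{n-i}f(a+i\frac{b-a}{n})$; equivalently $I_{n,m}(f)=\frac{1}{m(n+1)}\sum_{k=1}^m\sum_{i=0}^nf\left(\frac{kn-n+i}{mn}\right)$. For $f\in C[0,1]$, $\omega(f;t)=\sup\{|f(x)-f(y)|:x,y\in[0,1],|x-y|\le t\}$, and $\widetilde{\omega}(f;t)=\sup_{0\le x\le t\le y\le1,\,x\ne y}\frac{(t-x)\omega(f,y)+(y-t)\omega(f,x)}{y-x}$ for $0\le t\le1$, $\widetilde{\omega}(f;t)=\omega(f,1)$ for $t>1$ (the least concave majorant of $\omega(f;\cdot)$). *)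

theory Defs
  imports "HOL-Analysis.Analysis"
begin

definition bernstein_int :: "nat \<Rightarrow> real \<Rightarrow> real \<Rightarrow> (real \<Rightarrow> real) \<Rightarrow> real \<Rightarrow> real" where
  "bernstein_int n a b f x =
     (1 / (b - a) ^ n) * (\<Sum>i=0..n. real (n choose i) * (x - a) ^ i * (b - x) ^ (n - i)
                                     * f (a + real i * (b - a) / real n))"

text \<open>Index k of the subinterval [(k-1)/m, k/m] containing x (at breakpoints the left one;
  the choice does not affect the integral).\<close>
definition piece_index :: "nat \<Rightarrow> real \<Rightarrow> nat" where
  "piece_index m x = max 1 (nat \<lceil>real m * x\<rceil>)"

definition piecewise_bernstein :: "nat \<Rightarrow> nat \<Rightarrow> (real \<Rightarrow> real) \<Rightarrow> real \<Rightarrow> real" where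
  "piecewise_bernstein n m f x =
     (let k = piece_index m x in
       bernstein_int n ((real k - 1) / real m) (real k / real m) f x)"

definition I_nm :: "nat \<Rightarrow> nat \<Rightarrow> (real \<Rightarrow> real) \<Rightarrow> real" where
  "I_nm n m f = integral {0..1} (piecewise_bernstein n m f)"

definition modcont :: "(real \<Rightarrow> real) \<Rightarrow> real \<Rightarrow> real" where
  "modcont f t = Sup {\<bar>f x - f y\<bar> | x y. x \<in> {0..1} \<and> y \<in> {0..1} \<and> \<bar>x - y\<bar> \<le> t}"

text \<open>Least concave majorant of the modulus of continuity.\<close>
definition modcont_tilde :: "(real \<Rightarrow> real) \<Rightarrow> real \<Rightarrow> real" where
  "modcont_tilde f t =
     (if t \<le> 1 then
        Sup {((t - x) * modcont f y + (y - t) * modcont f x) / (y - x) | x y.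
               0 \<le> x \<and> x \<le> t \<and> t \<le> y \<and> y \<le> 1 \<and> x \<noteq> y}
      else modcont f 1)"

end

theory Submission
  imports Defs
begin

definition Lm :: "'a set \<Rightarrow> ('a \<Rightarrow> real) \<Rightarrow> real" where
  "Lm S h = (\<Sum>p\<in>S. h p) / real (card S)"

definition Cv :: "'a set \<Rightarrow> ('a \<Rightarrow> real) \<Rightarrow> ('a \<Rightarrow> real) \<Rightarrow> real" where
  "Cv S f g = Lm S (\<lambda>p. f p * g p) - Lm S f * Lm S g"

lemma Cv_pair:
  assumes "finite S" "S \<noteq> {}"
  shows "Cv S f g = (\<Sum>p\<in>S. \<Sum>q\<in>S. (f p - f q) * (g p - g q)) / (2 * real (card S) ^ 2)"
proof -
  define N where "N = real (card S)"
  have N: "N > 0" using assms by (simp add: N_def card_gt_0_iff)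
  have e: "(\<Sum>p\<in>S. \<Sum>q\<in>S. (f p - f q) * (g p - g q))
      = 2 * N * (\<Sum>p\<in>S. f p * g p) - 2 * (\<Sum>p\<in>S. f p) * (\<Sum>p\<in>S. g p)"
  proof -
    define F where "F = (\<Sum>q\<in>S. f q)"
    define G where "G = (\<Sum>q\<in>S. g q)"
    define A where "A = (\<Sum>q\<in>S. f q * g q)"
    have "(\<Sum>p\<in>S. \<Sum>q\<in>S. (f p - f q) * (g p - g q))
      = (\<Sum>p\<in>S. \<Sum>q\<in>S. f p * g p + f q * g q - f p * g q - f q * g p)"
      by (intro sum.cong refl) (simp add: algebra_simps)
    also have "\<dots> = (\<Sum>p\<in>S. N * (f p * g p) + A - f p * G - g p * F)"
      by (simp add: sum.distrib sum_subtractf sum_distrib_left N_def mult.commute A_def F_def G_def)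
    also have "\<dots> = N * A + N * A - F * G - G * F"
      by (simp add: sum.distrib sum_subtractf sum_distrib_left[symmetric] sum_distrib_right[symmetric] N_def A_def F_def G_def)
    also have "\<dots> = 2 * N * (\<Sum>p\<in>S. f p * g p) - 2 * (\<Sum>p\<in>S. f p) * (\<Sum>p\<in>S. g p)"
      by (simp add: A_def F_def G_def)
    finally show ?thesis .
  qed
  show ?thesis unfolding e Cv_def Lm_def N_def[symmetric] using N
    by (simp add: field_simps power2_eq_square)
qed

lemma Cv_nonneg:
  assumes "finite S" "S \<noteq> {}"
  shows "Cv S f f \<ge> 0"
  unfolding Cv_pair[OF assms]
  by (intro divide_nonneg_nonneg sum_nonneg) auto

lemma Cv_CS:
  assumes "finite S" "S \<noteq> {}"
  shows "\<bar>Cv S f g\<bar> \<le> sqrt (Cv S f f) * sqrt (Cv S g g)"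
proof -
  define D where "D = 2 * real (card S) ^ 2"
  have D: "D > 0" using assms by (simp add: D_def card_gt_0_iff)
  have dbl: "\<And>h. (\<Sum>p\<in>S. \<Sum>q\<in>S. h p q) = (\<Sum>z\<in>S \<times> S. h (fst z) (snd z))"
    by (simp add: sum.cartesian_product split_beta)
  have cs: "(\<Sum>z\<in>S\<times>S. (f (fst z) - f (snd z)) * (g (fst z) - g (snd z)))\<^sup>2
     \<le> (\<Sum>z\<in>S\<times>S. (f (fst z) - f (snd z))\<^sup>2) * (\<Sum>z\<in>S\<times>S. (g (fst z) - g (snd z))\<^sup>2)"
    by (rule Cauchy_Schwarz_ineq_sum)
  have "(Cv S f g)\<^sup>2 \<le> Cv S f f * Cv S g g"
  proof -
    have gen: "(X / D)\<^sup>2 \<le> (Y / D) * (Z / D)" if "X\<^sup>2 \<le> Y * Z" for X Y Z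
    proof -
      have "X\<^sup>2 / D\<^sup>2 \<le> Y * Z / D\<^sup>2" using that D by (intro divide_right_mono) auto
      thus ?thesis by (simp add: power_divide power2_eq_square)
    qed
    show ?thesis
      unfolding Cv_pair[OF assms] D_def[symmetric] dbl
      by (rule gen) (use cs in \<open>simp add: power2_eq_square\<close>)
  qed
  hence "sqrt ((Cv S f g)\<^sup>2) \<le> sqrt (Cv S f f * Cv S g g)" by (rule real_sqrt_le_mono)
  thus ?thesis by (simp add: real_sqrt_mult)
qed

lemma Cv_add:
  assumes "finite S" "S \<noteq> {}"
  shows "Cv S (\<lambda>p. f p + g p) (\<lambda>p. f p + g p) = Cv S f f + 2 * Cv S f g + Cv S g g"
proof -
  have "(\<Sum>p\<in>S. \<Sum>q\<in>S. (f p + g p - (f q + g q)) * (f p + g p - (f q + g q)))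
     = (\<Sum>p\<in>S. \<Sum>q\<in>S. (f p - f q) * (f p - f q) + 2 * ((f p - f q) * (g p - g q)) + (g p - g q) * (g p - g q))"
    by (intro sum.cong refl) (simp add: algebra_simps)
  also have "\<dots> = (\<Sum>p\<in>S. \<Sum>q\<in>S. (f p - f q) * (f p - f q)) + 2 * (\<Sum>p\<in>S. \<Sum>q\<in>S. (f p - f q) * (g p - g q))
      + (\<Sum>p\<in>S. \<Sum>q\<in>S. (g p - g q) * (g p - g q))"
    by (simp add: sum.distrib sum_distrib_left)
  finally show ?thesis unfolding Cv_pair[OF assms] by (simp add: add_divide_distrib)
qed

lemma sd_add:
  assumes "finite S" "S \<noteq> {}"
  shows "sqrt (Cv S (\<lambda>p. f p + g p) (\<lambda>p. f p + g p)) \<le> sqrt (Cv S f f) + sqrt (Cv S g g)"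
proof -
  have a: "Cv S f f \<ge> 0" "Cv S g g \<ge> 0" using Cv_nonneg[OF assms] by auto
  have c: "Cv S f g \<le> sqrt (Cv S f f) * sqrt (Cv S g g)" using Cv_CS[OF assms, of f g] by linarith
  have sq: "(sqrt (Cv S f f))\<^sup>2 = Cv S f f" "(sqrt (Cv S g g))\<^sup>2 = Cv S g g" using a by auto
  have "Cv S (\<lambda>p. f p + g p) (\<lambda>p. f p + g p) \<le> (sqrt (Cv S f f) + sqrt (Cv S g g))\<^sup>2"
    unfolding Cv_add[OF assms] power2_sum sq using c by linarith
  hence "sqrt (Cv S (\<lambda>p. f p + g p) (\<lambda>p. f p + g p)) \<le> sqrt ((sqrt (Cv S f f) + sqrt (Cv S g g))\<^sup>2)"
    by (rule real_sqrt_le_mono)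
  thus ?thesis using a by simp
qed

lemma Cv_shift:
  assumes "finite S" "S \<noteq> {}"
  shows "Cv S (\<lambda>p. f p - k) (\<lambda>p. f p - k) = Cv S f f"
  unfolding Cv_pair[OF assms] by simp

lemma Cv_range:
  assumes "finite S" "S \<noteq> {}" "\<And>p. p \<in> S \<Longrightarrow> 0 \<le> u p \<and> u p \<le> a"
  shows "Cv S u u \<le> a\<^sup>2 / 4"
proof -
  define w where "w = (\<lambda>p. u p - a / 2)"
  have N: "real (card S) > 0" using assms by (simp add: card_gt_0_iff)
  have "Cv S u u = Cv S w w" unfolding w_def Cv_shift[OF assms(1,2)] ..
  also have "\<dots> \<le> Lm S (\<lambda>p. w p * w p)" unfolding Cv_def by simp
  also have "\<dots> \<le> (\<Sum>p\<in>S. a\<^sup>2/4) / real (card S)" unfolding Lm_def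
  proof (intro divide_right_mono sum_mono)
    fix p assume p: "p \<in> S"
    have "\<bar>w p\<bar> \<le> a / 2" using assms(3)[OF p] unfolding w_def by (auto split: abs_split)
    hence "\<bar>w p\<bar> * \<bar>w p\<bar> \<le> (a/2) * (a/2)" by (intro mult_mono) auto
    thus "w p * w p \<le> a\<^sup>2/4" by (simp add: power2_eq_square flip: abs_mult)
  qed simp
  also have "\<dots> = a\<^sup>2/4" using N by simp
  finally show ?thesis .
qed

lemma Cv_lip:
  assumes "finite S" "S \<noteq> {}" "\<And>p q. p \<in> S \<Longrightarrow> q \<in> S \<Longrightarrow> \<bar>g p - g q\<bar> \<le> c * \<bar>x p - x q\<bar>"
  shows "Cv S g g \<le> c\<^sup>2 * Cv S x x"
proof -
  have "(\<Sum>p\<in>S. \<Sum>q\<in>S. (g p - g q) * (g p - g q)) \<le> (\<Sum>p\<in>S. \<Sum>q\<in>S. c\<^sup>2 * ((x p - x q) * (x p - x q)))"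
  proof (intro sum_mono)
    fix p q assume "p \<in> S" "q \<in> S"
    hence h: "\<bar>g p - g q\<bar> \<le> c * \<bar>x p - x q\<bar>" by (rule assms(3))
    have "\<bar>g p - g q\<bar> * \<bar>g p - g q\<bar> \<le> (c * \<bar>x p - x q\<bar>) * (c * \<bar>x p - x q\<bar>)"
      using h by (intro mult_mono) auto
    thus "(g p - g q) * (g p - g q) \<le> c\<^sup>2 * ((x p - x q) * (x p - x q))"
      by (simp add: power2_eq_square abs_mult_self algebra_simps flip: abs_mult)
  qed
  hence "(\<Sum>p\<in>S. \<Sum>q\<in>S. (g p - g q) * (g p - g q)) / (2 * real (card S) ^ 2)
     \<le> (c\<^sup>2 * (\<Sum>p\<in>S. \<Sum>q\<in>S. (x p - x q) * (x p - x q))) / (2 * real (card S) ^ 2)"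
    by (intro divide_right_mono) (auto simp: sum_distrib_left)
  thus ?thesis unfolding Cv_pair[OF assms(1,2)] by simp
qed

lemma sd_bound:
  assumes S: "finite S" "S \<noteq> {}" and a: "a \<ge> 0" and c: "c \<ge> 0"
    and h: "\<And>p q. p \<in> S \<Longrightarrow> q \<in> S \<Longrightarrow> \<bar>f p - f q\<bar> \<le> a + c * \<bar>x p - x q\<bar>"
  shows "sqrt (Cv S f f) \<le> c * sqrt (Cv S x x) + a / 2"
proof -
  define g where "g = (\<lambda>p. Min ((\<lambda>q. f q + c * \<bar>x p - x q\<bar>) ` S))"
  define u where "u = (\<lambda>p. f p - g p)"
  have gle: "g p \<le> f q + c * \<bar>x p - x q\<bar>" if "q \<in> S" for p q
    unfolding g_def using S that by (intro Min_le) auto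
  have gin: "\<exists>q\<in>S. g p = f q + c * \<bar>x p - x q\<bar>" for p
  proof -
    have "g p \<in> (\<lambda>q. f q + c * \<bar>x p - x q\<bar>) ` S" unfolding g_def using S by (intro Min_in) auto
    thus ?thesis by auto
  qed
  have glip: "\<bar>g p - g r\<bar> \<le> c * \<bar>x p - x r\<bar>" if "p \<in> S" "r \<in> S" for p r
  proof -
    have one: "g p' \<le> g r' + c * \<bar>x p' - x r'\<bar>" for p' r'
    proof -
      obtain q where q: "q \<in> S" "g r' = f q + c * \<bar>x r' - x q\<bar>" using gin by blast
      have "g p' \<le> f q + c * \<bar>x p' - x q\<bar>" by (rule gle[OF q(1)])
      also have "\<bar>x p' - x q\<bar> \<le> \<bar>x r' - x q\<bar> + \<bar>x p' - x r'\<bar>" by linarith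
      hence "c * \<bar>x p' - x q\<bar> \<le> c * \<bar>x r' - x q\<bar> + c * \<bar>x p' - x r'\<bar>"
        using c by (metis distrib_left mult_left_mono)
      finally show ?thesis using q(2) by linarith
    qed
    show ?thesis using one[of p r] one[of r p] by (auto simp: abs_minus_commute split: abs_split)
  qed
  have urange: "0 \<le> u p \<and> u p \<le> a" if "p \<in> S" for p
  proof -
    obtain q where q: "q \<in> S" "g p = f q + c * \<bar>x p - x q\<bar>" using gin by blast
    have "g p \<le> f p" using gle[OF that, of p] by simp
    moreover have "f p - f q \<le> a + c * \<bar>x p - x q\<bar>" using h[OF that q(1)] by linarith
    ultimately show ?thesis unfolding u_def using q(2) by linarith
  qed
  have f_eq: "f = (\<lambda>p. g p + u p)" unfolding u_def by auto
  have "sqrt (Cv S f f) \<le> sqrt (Cv S g g) + sqrt (Cv S u u)"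
    by (subst (1 2) f_eq) (rule sd_add[OF S])
  also have "sqrt (Cv S g g) \<le> sqrt (c\<^sup>2 * Cv S x x)"
    by (rule real_sqrt_le_mono, rule Cv_lip[OF S glip])
  also have "sqrt (c\<^sup>2 * Cv S x x) = c * sqrt (Cv S x x)" using c by (simp add: real_sqrt_mult)
  also have "sqrt (Cv S u u) \<le> sqrt (a\<^sup>2 / 4)"
    by (rule real_sqrt_le_mono, rule Cv_range[OF S urange])
  also have "sqrt (a\<^sup>2 / 4) = a / 2" using a by (simp add: real_sqrt_divide)
  finally show ?thesis by simp
qed

lemma modcont_facts:
  assumes cont: "continuous_on {0..1} f"
  obtains B where "B \<ge> 0"
    and "\<And>x y s. x \<in> {0..1} \<Longrightarrow> y \<in> {0..1} \<Longrightarrow> \<bar>x - y\<bar> \<le> s \<Longrightarrow> \<bar>f x - f y\<bar> \<le> modcont f s"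
    and "\<And>s. 0 \<le> s \<Longrightarrow> 0 \<le> modcont f s"
    and "\<And>s. 0 \<le> s \<Longrightarrow> modcont f s \<le> B"
    and "\<And>s s'. 0 \<le> s \<Longrightarrow> s \<le> s' \<Longrightarrow> modcont f s \<le> modcont f s'"
proof -
  have "bounded (f ` {0..1})"
    by (rule compact_imp_bounded[OF compact_continuous_image[OF cont compact_Icc]])
  then obtain B0 where B0: "\<And>x. x \<in> {0..1} \<Longrightarrow> \<bar>f x\<bar> \<le> B0"
    unfolding bounded_iff by (metis real_norm_def image_eqI)
  define E where "E = (\<lambda>s. {\<bar>f x - f y\<bar> | x y. x \<in> {0..1} \<and> y \<in> {0..1} \<and> \<bar>x - y\<bar> \<le> s})"
  have mE: "modcont f s = Sup (E s)" for s unfolding modcont_def E_def ..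
  have bdd: "\<And>z. z \<in> E s \<Longrightarrow> z \<le> 2 * B0" for s
  proof -
    fix z assume "z \<in> E s"
    then obtain x y where "z = \<bar>f x - f y\<bar>" "x \<in> {0..1}" "y \<in> {0..1}" unfolding E_def by blast
    with B0[of x] B0[of y] show "z \<le> 2 * B0" by linarith
  qed
  have bddE: "bdd_above (E s)" for s using bdd by (meson bdd_aboveI)
  have ne: "0 \<le> s \<Longrightarrow> 0 \<in> E s" for s unfolding E_def by force
  have B0pos: "0 \<le> B0" using B0[of 0] by simp
  show ?thesis
  proof (rule that[of "2 * B0"])
    show "0 \<le> 2 * B0" using B0pos by simp
    show "\<bar>f x - f y\<bar> \<le> modcont f s" if "x \<in> {0..1}" "y \<in> {0..1}" "\<bar>x - y\<bar> \<le> s" for x y s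
      unfolding mE by (rule cSup_upper[OF _ bddE]) (use that in \<open>auto simp: E_def\<close>)
    show "0 \<le> modcont f s" if "0 \<le> s" for s
      unfolding mE by (rule cSup_upper[OF ne[OF that] bddE])
    show "modcont f s \<le> 2 * B0" if "0 \<le> s" for s
      unfolding mE using ne[OF that] bdd by (intro cSup_least) auto
    show "modcont f s \<le> modcont f s'" if "0 \<le> s" "s \<le> s'" for s s'
      unfolding mE
    proof (rule cSup_subset_mono)
      show "E s \<noteq> {}" using ne[OF that(1)] by auto
      show "bdd_above (E s')" by (rule bddE)
      show "E s \<subseteq> E s'" unfolding E_def using that by force
    qed
  qed
qed

lemma tilde_line:
  assumes cont: "continuous_on {0..1} f" and t: "0 < t" "t \<le> 1"
  obtains a c where "a \<ge> 0" "c \<ge> 0" "a + c * t = modcont_tilde f t"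
    "\<And>d. 0 \<le> d \<Longrightarrow> d \<le> 1 \<Longrightarrow> modcont f d \<le> a + c * d"
proof -
  obtain B where B: "B \<ge> 0"
    and w_nonneg: "\<And>s. 0 \<le> s \<Longrightarrow> 0 \<le> modcont f s"
    and w_le: "\<And>s. 0 \<le> s \<Longrightarrow> modcont f s \<le> B"
    and w_mono: "\<And>s s'. 0 \<le> s \<Longrightarrow> s \<le> s' \<Longrightarrow> modcont f s \<le> modcont f s'"
    using modcont_facts[OF cont] by metis
  define w where "w = modcont f"
  define M where "M = modcont_tilde f t"
  define Ch where "Ch = {((t - x) * w y + (y - t) * w x) / (y - x) | x y.
               0 \<le> x \<and> x \<le> t \<and> t \<le> y \<and> y \<le> 1 \<and> x \<noteq> y}"
  have M_def': "M = Sup Ch" unfolding M_def modcont_tilde_def Ch_def w_def using t by simp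
  have chB: "z \<le> B" if "z \<in> Ch" for z
  proof -
    from that obtain x y where xy: "z = ((t - x) * w y + (y - t) * w x) / (y - x)"
      "0 \<le> x" "x \<le> t" "t \<le> y" "y \<le> 1" "x \<noteq> y" unfolding Ch_def by blast
    have "(t - x) * w y + (y - t) * w x \<le> (t - x) * B + (y - t) * B"
      using xy w_le unfolding w_def by (intro add_mono mult_left_mono) auto
    also have "\<dots> = B * (y - x)" by (simp add: algebra_simps)
    finally show ?thesis using xy by (simp add: divide_le_eq)
  qed
  have chord: "(t - x) * w y + (y - t) * w x \<le> M * (y - x)"
    if "0 \<le> x" "x \<le> t" "t \<le> y" "y \<le> 1" "x < y" for x y
  proof -
    have "((t - x) * w y + (y - t) * w x) / (y - x) \<le> M"
    proof -
      have "bdd_above Ch" using chB by (intro bdd_aboveI) 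
      thus ?thesis unfolding M_def' by (rule cSup_upper[rotated]) (use that in \<open>auto simp: Ch_def\<close>)
    qed
    thus ?thesis using that by (simp add: divide_le_eq)
  qed
  have wtM: "w t \<le> M" using chord[of 0 t] t w_nonneg by (simp add: w_def)
  have w0: "0 \<le> w 0" using w_nonneg by (simp add: w_def)
  define T where "T = {(w s - M) / (s - t) | s. t < s \<and> s \<le> 1}"
  define c where "c = Sup (insert 0 T)"
  have keyb: "(w s - M) / (s - t) \<le> (M - w d) / (t - d)" if "t < s" "s \<le> 1" "0 \<le> d" "d < t" for s d
  proof -
    have "(t - d) * w s + (s - t) * w d \<le> M * (s - d)" using chord[of d s] that by auto
    hence "(w s - M) * (t - d) \<le> (M - w d) * (s - t)" by (simp add: algebra_simps)
    thus ?thesis using that by (simp add: divide_simps)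
  qed
  have wdM: "w d \<le> M" if "0 \<le> d" "d \<le> t" for d
    using w_mono[of d t] that wtM by (simp add: w_def)
  have bddT: "bdd_above (insert 0 T)"
  proof (rule bdd_aboveI[of _ "(M - w 0) / t"])
    fix z assume "z \<in> insert 0 T"
    thus "z \<le> (M - w 0) / t"
      using keyb[of _ 0] wdM[of 0] t by (auto simp: T_def)
  qed
  have c0: "c \<ge> 0" unfolding c_def by (rule cSup_upper[OF _ bddT]) simp
  have above: "w d \<le> M + c * (d - t)" if "t < d" "d \<le> 1" for d
  proof -
    have "(w d - M) / (d - t) \<le> c" unfolding c_def
      by (rule cSup_upper[OF _ bddT]) (use that in \<open>auto simp: T_def\<close>)
    thus ?thesis using that by (simp add: divide_le_eq algebra_simps)
  qed
  have below: "w d \<le> M + c * (d - t)" if "0 \<le> d" "d < t" for d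
  proof -
    have "c \<le> (M - w d) / (t - d)" unfolding c_def
    proof (rule cSup_least)
      fix z assume "z \<in> insert 0 T"
      thus "z \<le> (M - w d) / (t - d)" using keyb[of _ d] wdM[of d] that by (auto simp: T_def)
    qed simp
    thus ?thesis using that by (simp add: le_divide_eq algebra_simps)
  qed
  have all: "w d \<le> M + c * (d - t)" if "0 \<le> d" "d \<le> 1" for d
    using above below wtM that by (cases "d < t"; cases "d = t") auto
  show ?thesis
  proof (rule that[of "M - c * t" c])
    show "0 \<le> M - c * t" using all[of 0] w0 by simp
    show "0 \<le> c" by (rule c0)
    show "M - c * t + c * t = modcont_tilde f t" by (simp add: M_def)
    show "modcont f d \<le> M - c * t + c * d" if "0 \<le> d" "d \<le> 1" for d
      using all[OF that] by (simp add: w_def algebra_simps)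
  qed
qed

lemma beta_nat:
  assumes "i \<le> n"
  shows "((\<lambda>t::real. t^i * (1-t)^(n-i)) has_integral (fact i * fact (n-i) / fact (Suc n))) {0..1}"
proof -
  have h: "((\<lambda>t. t powr (real i + 1 - 1) * (1 - t) powr (real (n-i) + 1 - 1)) has_integral
      Beta (real i + 1) (real (n-i) + 1)) {0..1}"
    by (rule has_integral_Beta_real) auto
  have "Beta (real i + 1) (real (n-i) + 1) = fact i * fact (n-i) / fact (Suc n)"
  proof -
    have e: "real i + 1 + (real (n - i) + 1) = 1 + real (Suc n)" using assms by simp
    show ?thesis unfolding Beta_def e
      using Gamma_fact[of i, where 'a=real] Gamma_fact[of "n-i", where 'a=real] Gamma_fact[of "Suc n", where 'a=real]
      by (simp add: add.commute)
  qed
  with h have h2: "((\<lambda>t. t powr (real i) * (1 - t) powr (real (n-i))) has_integral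
      (fact i * fact (n-i) / fact (Suc n))) {0..1}" by simp
  show ?thesis
  proof (rule has_integral_spike_finite[OF _ _ h2, of "{0,1}"])
    fix t :: real assume "t \<in> {0..1} - {0,1}"
    hence "0 < t" "0 < 1 - t" by auto
    thus "t^i * (1-t)^(n-i) = t powr (real i) * (1 - t) powr (real (n-i))"
      by (simp add: powr_realpow)
  qed simp
qed

lemma basis_int01:
  assumes "i \<le> n"
  shows "((\<lambda>t::real. real (n choose i) * (t^i * (1-t)^(n-i))) has_integral (1 / real (Suc n))) {0..1}"
proof -
  have "real (n choose i) * (fact i * fact (n-i) / fact (Suc n)) = 1 / real (Suc n)"
  proof -
    have "(fact n :: real) > 0" by simp
    hence "fact n + fact n * real n \<noteq> 0" by (metis add_pos_nonneg less_irrefl mult_nonneg_nonneg of_nat_0_le_iff order_less_le)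
    thus ?thesis using assms by (simp add: binomial_fact field_simps)
  qed
  thus ?thesis using has_integral_mult_right[OF beta_nat[OF assms], of "real (n choose i)"] by simp
qed

lemma basis_int:
  fixes a b :: real
  assumes "a < b" "i \<le> n"
  shows "((\<lambda>x. real (n choose i) * (x-a)^i * (b-x)^(n-i) / (b-a)^n) has_integral (b-a) / real (Suc n)) {a..b}"
proof -
  define p where "p = (\<lambda>x. real (n choose i) * (x-a)^i * (b-x)^(n-i) / (b-a)^n)"
  have m: "b - a > 0" using assms by simp
  have eq: "p ((b - a) *\<^sub>R u + a) = real (n choose i) * (u^i * (1-u)^(n-i))" for u
  proof -
    have "(b - (b - a) * u - a) = (b - a) * (1 - u)" by (simp add: algebra_simps)
    hence "p ((b - a) *\<^sub>R u + a) = real (n choose i) * ((b-a)*u)^i * ((b-a)*(1-u))^(n-i) / (b-a)^n"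
      unfolding p_def by (simp add: algebra_simps)
    also have "\<dots> = real (n choose i) * (u^i * (1-u)^(n-i)) * ((b-a)^i * (b-a)^(n-i) / (b-a)^n)"
      by (simp add: power_mult_distrib)
    also have "(b-a)^i * (b-a)^(n-i) = (b-a)^n" using assms(2) by (simp flip: power_add)
    finally show ?thesis using m by simp
  qed
  have "((\<lambda>u. p ((b - a) *\<^sub>R u + a)) has_integral (((b-a) / real (Suc n)) /\<^sub>R (b - a) ^ DIM(real)))
       (cbox ((a - a) /\<^sub>R (b - a)) ((b - a) /\<^sub>R (b - a)))"
    unfolding eq using basis_int01[OF assms(2)] m by (simp add: cbox_interval)
  hence "(p has_integral (b-a) / real (Suc n)) (cbox a b)"
    using has_integral_affinity_iff[OF m] by blast
  thus ?thesis by (simp add: p_def cbox_interval)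
qed

lemma bernstein_has_int:
  fixes a b :: real
  assumes "a < b"
  shows "(bernstein_int n a b h has_integral
           ((b - a) / real (Suc n) * (\<Sum>i=0..n. h (a + real i * (b - a) / real n)))) {a..b}"
proof -
  have eq: "bernstein_int n a b h = (\<lambda>x. \<Sum>i=0..n. h (a + real i * (b - a) / real n) *
              (real (n choose i) * (x-a)^i * (b-x)^(n-i) / (b-a)^n))"
    unfolding bernstein_int_def by (auto simp: sum_divide_distrib sum_distrib_left algebra_simps intro!: sum.cong)
  have "((\<lambda>x. \<Sum>i=0..n. h (a + real i * (b - a) / real n) *
              (real (n choose i) * (x-a)^i * (b-x)^(n-i) / (b-a)^n)) has_integral
         (\<Sum>i=0..n. h (a + real i * (b - a) / real n) * ((b - a) / real (Suc n)))) {a..b}"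
    by (intro has_integral_sum has_integral_mult_right basis_int assms) auto
  thus ?thesis unfolding eq by (simp add: sum_distrib_left sum_distrib_right mult.commute)
qed

definition xnode :: "nat \<Rightarrow> nat \<Rightarrow> nat \<times> nat \<Rightarrow> real" where
  "xnode n m z = (real (fst z) - 1) / real m + real (snd z) / (real m * real n)"

lemma piece_has_int:
  assumes "1 \<le> k" "m \<ge> 1"
  shows "(piecewise_bernstein n m h has_integral
           (1 / (real m * real (Suc n)) * (\<Sum>i=0..n. h (xnode n m (k, i))))) {(real k - 1) / real m .. real k / real m}"
proof -
  define a where "a = (real k - 1) / real m"
  define b where "b = real k / real m"
  have m: "real m > 0" using assms by simp
  have ab: "a < b" unfolding a_def b_def using m by (simp add: divide_strict_right_mono)
  have ba: "b - a = 1 / real m" unfolding a_def b_def by (simp add: diff_divide_distrib)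
  have bi: "(bernstein_int n a b h has_integral
           ((b - a) / real (Suc n) * (\<Sum>i=0..n. h (a + real i * (b - a) / real n)))) {a..b}"
    by (rule bernstein_has_int[OF ab])
  have val: "(b - a) / real (Suc n) * (\<Sum>i=0..n. h (a + real i * (b - a) / real n))
     = 1 / (real m * real (Suc n)) * (\<Sum>i=0..n. h (xnode n m (k, i)))"
    unfolding ba by (simp add: xnode_def a_def)
  have pi: "piece_index m x = k" if "x \<in> {a..b} - {a}" for x
  proof -
    from that have "a < x" "x \<le> b" by auto
    hence "real k - 1 < real m * x" "real m * x \<le> real k"
      unfolding a_def b_def using m by (auto simp: field_simps)
    hence "\<lceil>real m * x\<rceil> = int k" by (intro ceiling_unique) auto
    thus ?thesis unfolding piece_index_def using assms by simp
  qed
  show ?thesis unfolding a_def[symmetric] b_def[symmetric] val[symmetric]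
  proof (rule has_integral_spike_finite[OF _ _ bi, of "{a}"])
    fix x assume "x \<in> {a..b} - {a}"
    thus "piecewise_bernstein n m h x = bernstein_int n a b h x"
      unfolding piecewise_bernstein_def Let_def pi[OF \<open>x \<in> {a..b} - {a}\<close>] a_def b_def by simp
  qed simp
qed

lemma pw_has_int:
  assumes "m \<ge> 1" "j \<le> m"
  shows "(piecewise_bernstein n m h has_integral
           (\<Sum>k=1..j. 1 / (real m * real (Suc n)) * (\<Sum>i=0..n. h (xnode n m (k, i))))) {0 .. real j / real m}"
  using assms(2)
proof (induction j)
  case 0
  have "(piecewise_bernstein n m h has_integral 0) {0..0::real}" by (rule has_integral_null_real) simp
  then show ?case by simp
next
  case (Suc j)
  have m: "real m > 0" using assms by simp
  have p: "(piecewise_bernstein n m h has_integral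
           (1 / (real m * real (Suc n)) * (\<Sum>i=0..n. h (xnode n m (Suc j, i))))) {real j / real m .. real (Suc j) / real m}"
    using piece_has_int[of "Suc j" m n h] assms by simp
  have "(piecewise_bernstein n m h has_integral
           ((\<Sum>k=1..j. 1 / (real m * real (Suc n)) * (\<Sum>i=0..n. h (xnode n m (k, i))))
           + 1 / (real m * real (Suc n)) * (\<Sum>i=0..n. h (xnode n m (Suc j, i))))) {0 .. real (Suc j) / real m}"
    by (rule has_integral_combine[OF _ _ Suc.IH p]) (use Suc.prems m in \<open>auto simp: divide_right_mono\<close>)
  thus ?case by (simp add: add.commute)
qed

lemma prodsum: "(\<Sum>z\<in>A \<times> B. g z) = (\<Sum>a\<in>A. \<Sum>b\<in>B. g (a, b))"
  by (simp add: sum.cartesian_product split_beta)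

lemma I_nm_Lm:
  assumes "m \<ge> 1"
  shows "I_nm n m h = Lm ({1..m} \<times> {0..n}) (\<lambda>z. h (xnode n m z))"
proof -
  have "(piecewise_bernstein n m h has_integral
           (\<Sum>k=1..m. 1 / (real m * real (Suc n)) * (\<Sum>i=0..n. h (xnode n m (k, i))))) {0 .. 1}"
    using pw_has_int[OF assms order_refl, of n h] assms by simp
  hence "I_nm n m h = (\<Sum>k=1..m. 1 / (real m * real (Suc n)) * (\<Sum>i=0..n. h (xnode n m (k, i))))"
    unfolding I_nm_def by (rule integral_unique)
  also have "\<dots> = (\<Sum>z\<in>{1..m} \<times> {0..n}. h (xnode n m z)) / (real m * real (Suc n))"
    by (simp add: prodsum sum_divide_distrib[symmetric])
  also have "\<dots> = Lm ({1..m} \<times> {0..n}) (\<lambda>z. h (xnode n m z))"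
    unfolding Lm_def by (simp add: card_cartesian_product algebra_simps)
  finally show ?thesis .
qed

lemma xnode_range:
  assumes "m \<ge> 1" "n \<ge> 1" "z \<in> {1..m} \<times> {0..n}"
  shows "0 \<le> xnode n m z \<and> xnode n m z \<le> 1"
proof -
  obtain k i where z: "z = (k, i)" "1 \<le> k" "k \<le> m" "i \<le> n" using assms(3) by auto
  have e: "xnode n m z = (real n * (real k - 1) + real i) / (real m * real n)"
    unfolding z xnode_def using assms by (simp add: field_simps)
  have "real n * (real k - 1) + real i \<le> real n * (real m - 1) + real n"
    using z by (intro add_mono mult_left_mono) auto
  also have "\<dots> = real m * real n" by (simp add: algebra_simps)
  finally have "real n * (real k - 1) + real i \<le> real m * real n" .
  moreover have "0 \<le> real n * (real k - 1) + real i" using z by simp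
  ultimately show ?thesis unfolding e using assms by (simp add: divide_le_eq)
qed

lemma sum_id_real: "(\<Sum>i=0..n. real i) = real n * (real n + 1) / 2"
  by (induction n) (auto simp: field_simps)

lemma sum_sq_real: "(\<Sum>i=0..n. (real i)\<^sup>2) = real n * (real n + 1) * (2 * real n + 1) / 6"
  by (induction n) (auto simp: field_simps power2_eq_square)

lemma sum_km1: "(\<Sum>k=1..m. real k - 1) = real m * (real m - 1) / 2"
  by (induction m) (auto simp: field_simps)

lemma sum_km1_sq: "(\<Sum>k=1..m. (real k - 1)\<^sup>2) = real m * (real m - 1) * (2 * real m - 1) / 6"
  by (induction m) (auto simp: field_simps power2_eq_square)

lemma var_nodes:
  assumes "m \<ge> 1" "n \<ge> 1"
  shows "Cv ({1..m} \<times> {0..n}) (xnode n m) (xnode n m) = 1/12 + 1 / (6 * real m ^ 2 * real n)"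
proof -
  define A where "A = (\<lambda>k::nat. (real k - 1) / real m)"
  define B where "B = 1 / (real m * real n)"
  have x: "xnode n m (k, i) = A k + B * real i" for k i unfolding xnode_def A_def B_def by simp
  have s1: "(\<Sum>z\<in>{1..m} \<times> {0..n}. xnode n m z) = (\<Sum>k=1..m. \<Sum>i=0..n. A k + B * real i)"
    by (simp add: prodsum x)
  have s2: "(\<Sum>z\<in>{1..m} \<times> {0..n}. xnode n m z * xnode n m z) = (\<Sum>k=1..m. \<Sum>i=0..n. (A k + B * real i)\<^sup>2)"
    by (simp add: prodsum x power2_eq_square)
  have i1: "(\<Sum>i=0..n. A k + B * real i) = (real n + 1) * A k + B * (real n * (real n + 1) / 2)" for k
    by (simp add: sum.distrib sum_distrib_left[symmetric] sum_id_real)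
  have i2: "(\<Sum>i=0..n. (A k + B * real i)\<^sup>2) = (real n + 1) * (A k)\<^sup>2 + 2 * A k * B * (real n * (real n + 1) / 2)
        + B\<^sup>2 * (real n * (real n + 1) * (2 * real n + 1) / 6)" for k
  proof -
    have "(\<Sum>i=0..n. (A k + B * real i)\<^sup>2) = (\<Sum>i=0..n. (A k)\<^sup>2 + (2 * A k * B) * real i + B\<^sup>2 * (real i)\<^sup>2)"
      by (intro sum.cong refl) (simp add: power2_sum power_mult_distrib)
    also have "\<dots> = (real n + 1) * (A k)\<^sup>2 + (2 * A k * B) * (\<Sum>i=0..n. real i) + B\<^sup>2 * (\<Sum>i=0..n. (real i)\<^sup>2)"
      by (simp add: sum.distrib sum_distrib_left[symmetric])
    finally show ?thesis by (simp add: sum_id_real sum_sq_real)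
  qed
  have a1: "(\<Sum>k=1..m. A k) = real m * (real m - 1) / 2 / real m"
  proof -
    have "(\<Sum>k=1..m. A k) = (\<Sum>k=1..m. real k - 1) / real m" unfolding A_def by (simp add: sum_divide_distrib)
    thus ?thesis by (simp only: sum_km1)
  qed
  have a2: "(\<Sum>k=1..m. (A k)\<^sup>2) = real m * (real m - 1) * (2 * real m - 1) / 6 / (real m)\<^sup>2"
  proof -
    have "(\<Sum>k=1..m. (A k)\<^sup>2) = (\<Sum>k=1..m. (real k - 1)\<^sup>2) / (real m)\<^sup>2" unfolding A_def by (simp add: sum_divide_distrib power_divide)
    thus ?thesis by (simp only: sum_km1_sq)
  qed
  have S1: "(\<Sum>z\<in>{1..m} \<times> {0..n}. xnode n m z) = (real n + 1) * (real m * (real m - 1) / 2 / real m) + real m * (B * (real n * (real n + 1) / 2))"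
  proof -
    have "(\<Sum>k=1..m. (real n + 1) * A k + B * (real n * (real n + 1) / 2)) = (real n + 1) * (\<Sum>k=1..m. A k) + real m * (B * (real n * (real n + 1) / 2))"
      by (simp add: sum.distrib sum_distrib_left[symmetric])
    thus ?thesis unfolding s1 i1 a1 .
  qed
  have S2: "(\<Sum>z\<in>{1..m} \<times> {0..n}. xnode n m z * xnode n m z) =
      (real n + 1) * (real m * (real m - 1) * (2 * real m - 1) / 6 / (real m)\<^sup>2)
      + 2 * (real m * (real m - 1) / 2 / real m) * B * (real n * (real n + 1) / 2)
      + real m * (B\<^sup>2 * (real n * (real n + 1) * (2 * real n + 1) / 6))"
  proof -
    have "(\<Sum>k=1..m. (real n + 1) * (A k)\<^sup>2 + 2 * A k * B * (real n * (real n + 1) / 2)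
        + B\<^sup>2 * (real n * (real n + 1) * (2 * real n + 1) / 6))
      = (real n + 1) * (\<Sum>k=1..m. (A k)\<^sup>2) + 2 * (\<Sum>k=1..m. A k) * B * (real n * (real n + 1) / 2)
        + real m * (B\<^sup>2 * (real n * (real n + 1) * (2 * real n + 1) / 6))"
      by (simp add: sum.distrib sum_distrib_left[symmetric] sum_distrib_right[symmetric])
    thus ?thesis unfolding s2 i2 a1 a2 .
  qed
  have card: "real (card ({1..m} \<times> {0..n})) = real m * (real n + 1)" by (simp add: card_cartesian_product algebra_simps)
  have mpos: "real m > 0" "real n > 0" using assms by auto
  define M where "M = real m"
  define N where "N = real n"
  have MN: "M > 0" "N > 0" using mpos by (auto simp: M_def N_def)
  have L1: "Lm ({1..m} \<times> {0..n}) (xnode n m) = 1/2"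
  proof -
    have "(N + 1) * (M * (M - 1) / 2 / M) + M * (1 / (M * N) * (N * (N + 1) / 2)) = M * (N + 1) / 2"
      using MN by (simp add: field_simps)
    thus ?thesis unfolding Lm_def S1 card B_def M_def[symmetric] N_def[symmetric] using MN by simp
  qed
  have L2: "Lm ({1..m} \<times> {0..n}) (\<lambda>p. xnode n m p * xnode n m p) = 1/3 + 1 / (6 * M ^ 2 * N)"
  proof -
    have a: "(N + 1) * (M * (M - 1) * (2 * M - 1) / 6 / M\<^sup>2) = (N + 1) * ((M - 1) * (2 * M - 1) / (6 * M))"
      using MN by (simp add: power2_eq_square)
    have b: "2 * (M * (M - 1) / 2 / M) * (1 / (M * N)) * (N * (N + 1) / 2) = (N + 1) * ((M - 1) / (2 * M))"
      using MN by (simp add: field_simps)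
    have c: "M * ((1 / (M * N))\<^sup>2 * (N * (N + 1) * (2 * N + 1) / 6)) = (N + 1) * ((2 * N + 1) / (6 * M * N))"
      using MN by (simp add: field_simps power2_eq_square)
    have d: "(N + 1) * ((M - 1) * (2 * M - 1) / (6 * M)) + (N + 1) * ((M - 1) / (2 * M)) + (N + 1) * ((2 * N + 1) / (6 * M * N))
       = (M * (N + 1)) * (1/3 + 1 / (6 * M ^ 2 * N))"
      using MN by (simp add: field_simps power2_eq_square)
    show ?thesis unfolding Lm_def S2 card B_def M_def[symmetric] N_def[symmetric] a b c d using MN by simp
  qed
  show ?thesis unfolding Cv_def L1 L2 M_def N_def by simp
qed

lemma sd_f_bound:
  assumes "m \<ge> 1" "n \<ge> 1" and cont: "continuous_on {0..1} f"
  shows "sqrt (Cv ({1..m} \<times> {0..n}) (\<lambda>p. f (xnode n m p)) (\<lambda>p. f (xnode n m p)))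
     \<le> modcont_tilde f (2 * sqrt (1/12 + 1 / (6 * real m ^ 2 * real n))) / 2"
proof -
  define S where "S = {1..m} \<times> {0..n}"
  define x where "x = xnode n m"
  define \<sigma> where "\<sigma> = sqrt (1/12 + 1 / (6 * real m ^ 2 * real n))"
  have S: "finite S" "S \<noteq> {}" unfolding S_def using assms by auto
  have sig: "sqrt (Cv S x x) = \<sigma>" unfolding S_def x_def \<sigma>_def var_nodes[OF assms(1,2)] ..
  have small: "1 / (6 * real m ^ 2 * real n) \<le> 1/6"
  proof -
    have "1 \<le> real m ^ 2" using assms by (simp add: one_le_power)
    moreover have "1 \<le> real n" using assms by simp
    ultimately have "1 * 1 \<le> real m ^ 2 * real n" by (intro mult_mono) auto
    hence X: "1 \<le> real m ^ 2 * real n" by simp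
    have "1 / (6 * (real m ^ 2 * real n)) \<le> 1 / 6"
      by (rule divide_left_mono) (use X in auto)
    thus ?thesis by (simp add: mult.assoc)
  qed
  have t0: "0 < 2 * \<sigma>" unfolding \<sigma>_def by (simp add: add_pos_nonneg)
  have "\<sigma> \<le> sqrt (1/4)" unfolding \<sigma>_def using small by (intro real_sqrt_le_mono) linarith
  hence t1: "2 * \<sigma> \<le> 1" by (simp add: real_sqrt_divide)
  obtain a c where ac: "a \<ge> 0" "c \<ge> 0" "a + c * (2 * \<sigma>) = modcont_tilde f (2 * \<sigma>)"
    and line: "\<And>d. 0 \<le> d \<Longrightarrow> d \<le> 1 \<Longrightarrow> modcont f d \<le> a + c * d"
    using tilde_line[OF cont t0 t1] by metis
  obtain B where mc: "\<And>x y s. x \<in> {0..1} \<Longrightarrow> y \<in> {0..1} \<Longrightarrow> \<bar>x - y\<bar> \<le> s \<Longrightarrow> \<bar>f x - f y\<bar> \<le> modcont f s"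
    using modcont_facts[OF cont] by metis
  have xr: "p \<in> S \<Longrightarrow> x p \<in> {0..1}" for p unfolding S_def x_def using xnode_range[OF assms(1,2)] by auto
  have h: "\<bar>f (x p) - f (x q)\<bar> \<le> a + c * \<bar>x p - x q\<bar>" if "p \<in> S" "q \<in> S" for p q
  proof -
    have "\<bar>f (x p) - f (x q)\<bar> \<le> modcont f \<bar>x p - x q\<bar>" by (rule mc[OF xr[OF that(1)] xr[OF that(2)] order_refl])
    also have "\<dots> \<le> a + c * \<bar>x p - x q\<bar>" using xr[OF that(1)] xr[OF that(2)] by (intro line) auto
    finally show ?thesis .
  qed
  have "sqrt (Cv S (\<lambda>p. f (x p)) (\<lambda>p. f (x p))) \<le> c * sqrt (Cv S x x) + a / 2"
    by (rule sd_bound[OF S ac(1,2) h])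
  also have "\<dots> = modcont_tilde f (2 * \<sigma>) / 2" unfolding sig ac(3)[symmetric] by (simp add: field_simps)
  finally show ?thesis unfolding S_def x_def \<sigma>_def .
qed

theorem mainTheorem7:
  fixes n m :: nat and f g :: "real \<Rightarrow> real"
  assumes "n \<ge> 1" and "m \<ge> 1"
    and "continuous_on {0..1} f" and "continuous_on {0..1} g"
  shows "\<bar>I_nm n m (\<lambda>x. f x * g x) - I_nm n m f * I_nm n m g\<bar>
         \<le> 1/4 * modcont_tilde f (2 * sqrt (1/12 + 1 / (6 * real m ^ 2 * real n)))
               * modcont_tilde g (2 * sqrt (1/12 + 1 / (6 * real m ^ 2 * real n)))"
proof -
  define S where "S = {1..m} \<times> {0..n}"
  define F where "F = (\<lambda>p. f (xnode n m p))"
  define G where "G = (\<lambda>p. g (xnode n m p))"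
  define t where "t = 2 * sqrt (1/12 + 1 / (6 * real m ^ 2 * real n))"
  have S: "finite S" "S \<noteq> {}" unfolding S_def using assms by auto
  have eq: "I_nm n m (\<lambda>x. f x * g x) - I_nm n m f * I_nm n m g = Cv S F G"
    unfolding Cv_def S_def F_def G_def I_nm_Lm[OF assms(2)] by simp
  have bf: "sqrt (Cv S F F) \<le> modcont_tilde f t / 2"
    unfolding S_def F_def t_def by (rule sd_f_bound[OF assms(2,1,3)])
  have bg: "sqrt (Cv S G G) \<le> modcont_tilde g t / 2"
    unfolding S_def G_def t_def by (rule sd_f_bound[OF assms(2,1,4)])
  have "\<bar>Cv S F G\<bar> \<le> sqrt (Cv S F F) * sqrt (Cv S G G)" by (rule Cv_CS[OF S])
  also have "\<dots> \<le> (modcont_tilde f t / 2) * (modcont_tilde g t / 2)"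
  proof (rule mult_mono[OF bf bg])
    show "0 \<le> sqrt (Cv S G G)" using Cv_nonneg[OF S, of G] by simp
    show "0 \<le> modcont_tilde f t / 2" using bf Cv_nonneg[OF S, of F] real_sqrt_ge_zero[of "Cv S F F"] by linarith
  qed
  finally show ?thesis unfolding eq t_def[symmetric] by simp
qed

end
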